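(* Consider the latent class MNL pricing model of the context. Then: (i) $\bar{\mathcal{R}}\le\beta_e\,\mathcal{R}^e\le\beta_e\,\mathcal{R}^*$, with no further conditions, where $\beta_e$ is $\beta_f$ for $f=e=(1,\dots,1)$. (ii) If for each $j\in M$ the price sensitivities $b_{kj}=b_j$ do not depend on $k\in N$, then the economic factor and the robust factor are both proportional to $e$ (so pricing along either is equivalent to uniform pricing). (iii) For every vector $f$ with positive components such that $d^j(\bar p^j)'f\le\min_{i\in N}f_i$ for all $j\in M$, we have $\bar{\mathcal{R}}\le\beta_f\,\mathcal{R}^f\le\beta_f\,\mathcal{R}^*$.
   Context: Products $N=\{1,\dots,n\}$, customer types $M=\{1,\dots,m\}$ with weights $\theta_j>0$, $\sum_j\theta_j=1$. For type $j$, with parameters $a_{ij}\in\mathbb{R}$ and $b_{ij}>0$, the demand for product $i$ at price vector $p$ is $$d_{ij}(p)=\frac{\exp(a_{ij}-b_{ij}p_i)}{1+\sum_{k\in N}\exp(a_{kj}-b_{kj}p_k)},$$ $d^j(p)$ is the vector $(d_{ij}(p))_{i\in N}$, and $R_j(p)=\sum_ip_id_{ij}(p)$. Standing assumption (A0): each $R_j$ attains its maximum $\mathcal{R}^*_j$ over $p\ge 0$ at a price vector $\bar p^j=(\bar p_{ij})_i$ with positive finite components. $\bar{\mathcal{R}}:=\sum_j\theta_j\mathcal{R}^*_j$; $R(p):=\sum_j\theta_jR_j(p)$; $\mathcal{R}^*:=\max_{p\ge0}R(p)$; for positive $f$, $\mathcal{R}^f:=\max_{q>0}R(qf)$ and $\beta_f:=1+\ln(q_{\max}/q_{\min})$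 with $q_{\min}=\min_{i,j}\bar p_{ij}/f_i$, $q_{\max}=\max_{i,j}\bar p_{ij}/f_i$. The economic factor is $f=\sum_j\alpha_j\bar p^j$ with $\alpha_j=\theta_j\mathcal{R}^*_j/\bar{\mathcal{R}}$; the robust factor is $f^*_i=\sqrt{p^L_ip^H_i}$ where $p^H_i=\max_j\bar p_{ij}$, $p^L_i=\min_j\bar p_{ij}$. *)

theory Defs
  imports "HOL-Analysis.Analysis"
begin

text \<open>Products are indexed by a finite type 'i, customer types by a finite type 'j.
  a i j, b i j are the MNL parameters, p :: 'i \<Rightarrow> real a price vector.\<close>

definition demand :: "('i::finite \<Rightarrow> 'j \<Rightarrow> real) \<Rightarrow> ('i \<Rightarrow> 'j \<Rightarrow> real) \<Rightarrow> ('i \<Rightarrow> real) \<Rightarrow> 'i \<Rightarrow> 'j \<Rightarrow> real"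
  where "demand a b p i j =
    exp (a i j - b i j * p i) / (1 + (\<Sum>k\<in>UNIV. exp (a k j - b k j * p k)))"

definition revj :: "('i::finite \<Rightarrow> 'j \<Rightarrow> real) \<Rightarrow> ('i \<Rightarrow> 'j \<Rightarrow> real) \<Rightarrow> 'j \<Rightarrow> ('i \<Rightarrow> real) \<Rightarrow> real"
  where "revj a b j p = (\<Sum>i\<in>UNIV. p i * demand a b p i j)"

definition revtot :: "('j::finite \<Rightarrow> real) \<Rightarrow> ('i::finite \<Rightarrow> 'j \<Rightarrow> real) \<Rightarrow> ('i \<Rightarrow> 'j \<Rightarrow> real) \<Rightarrow> ('i \<Rightarrow> real) \<Rightarrow> real"
  where "revtot \<theta> a b p = (\<Sum>j\<in>UNIV. \<theta> j * revj a b j p)"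

definition Rbar :: "('j::finite \<Rightarrow> real) \<Rightarrow> ('i::finite \<Rightarrow> 'j \<Rightarrow> real) \<Rightarrow> ('i \<Rightarrow> 'j \<Rightarrow> real) \<Rightarrow> ('j \<Rightarrow> 'i \<Rightarrow> real) \<Rightarrow> real"
  where "Rbar \<theta> a b pbar = (\<Sum>j\<in>UNIV. \<theta> j * revj a b j (pbar j))"

definition Ropt :: "('j::finite \<Rightarrow> real) \<Rightarrow> ('i::finite \<Rightarrow> 'j \<Rightarrow> real) \<Rightarrow> ('i \<Rightarrow> 'j \<Rightarrow> real) \<Rightarrow> real"
  where "Ropt \<theta> a b = Sup {revtot \<theta> a b p | p. \<forall>i. 0 \<le> p i}"

definition Rfac :: "('j::finite \<Rightarrow> real) \<Rightarrow> ('i::finite \<Rightarrow> 'j \<Rightarrow> real) \<Rightarrow> ('i \<Rightarrow> 'j \<Rightarrow> real) \<Rightarrow> ('i \<Rightarrow> real) \<Rightarrow> real"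
  where "Rfac \<theta> a b f = Sup {revtot \<theta> a b (\<lambda>i. q * f i) | q::real. 0 < q}"

definition qmin :: "('j::finite \<Rightarrow> 'i::finite \<Rightarrow> real) \<Rightarrow> ('i \<Rightarrow> real) \<Rightarrow> real"
  where "qmin pbar f = Min {pbar j i / f i | i j. True}"

definition qmax :: "('j::finite \<Rightarrow> 'i::finite \<Rightarrow> real) \<Rightarrow> ('i \<Rightarrow> real) \<Rightarrow> real"
  where "qmax pbar f = Max {pbar j i / f i | i j. True}"

definition beta :: "('j::finite \<Rightarrow> 'i::finite \<Rightarrow> real) \<Rightarrow> ('i \<Rightarrow> real) \<Rightarrow> real"
  where "beta pbar f = 1 + ln (qmax pbar f / qmin pbar f)"

definition econ_factor :: "('j::finite \<Rightarrow> real) \<Rightarrow> ('i::finite \<Rightarrow> 'j \<Rightarrow> real) \<Rightarrow> ('i \<Rightarrow> 'j \<Rightarrow> real) \<Rightarrow> ('j \<Rightarrow> 'i \<Rightarrow> real) \<Rightarrow> 'i \<Rightarrow> real"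
  where "econ_factor \<theta> a b pbar i =
    (\<Sum>j\<in>UNIV. (\<theta> j * revj a b j (pbar j) / Rbar \<theta> a b pbar) * pbar j i)"

definition robust_factor :: "('j::finite \<Rightarrow> 'i \<Rightarrow> real) \<Rightarrow> 'i \<Rightarrow> real"
  where "robust_factor pbar i = sqrt ((MIN j. pbar j i) * (MAX j. pbar j i))"

end

theory Submission imports Defs begin

lemma step_integral:
  fixes L H t :: real
  assumes "L \<le> t" "t \<le> H"
  shows "((\<lambda>q. if q \<in> {L..t} then 1 else 0) has_integral (t - L)) {L..H}"
proof -
  have "((\<lambda>q. 1::real) has_integral (t - L)) (cbox L t)"
    using has_integral_const_real[of "1::real" L t] assms by simp
  then have "((\<lambda>q. if q \<in> cbox L t then 1 else 0) has_integral (t - L)) (cbox L H)"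
    by (rule has_integral_restrict_closed_subinterval) (use assms in auto)
  then show ?thesis by simp
qed

lemma inv_integral:
  fixes L H M :: real
  assumes "0 < L" "L \<le> H"
  shows "((\<lambda>q. M / q) has_integral (M * ln H - M * ln L)) {L..H}"
proof -
  have "((\<lambda>q. M / q) has_integral ((\<lambda>q. M * ln q) H - (\<lambda>q. M * ln q) L)) {L..H}"
  proof (rule fundamental_theorem_of_calculus[OF assms(2)])
    fix x assume x: "x \<in> {L..H}"
    then have "x > 0" using assms by auto
    have "((\<lambda>q. M * ln q) has_real_derivative (M * (1/x))) (at x within {L..H})"
      by (rule derivative_eq_intros | use \<open>x>0\<close> in auto)+
    then show "((\<lambda>q. M * ln q) has_vector_derivative M / x) (at x within {L..H})"
      by (simp add: has_real_derivative_iff_has_vector_derivative)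
  qed
  then show ?thesis by simp
qed

lemma sum_bound:
  fixes w t :: "'k \<Rightarrow> real" and K :: "'k set"
  assumes fin: "finite K" and w: "\<forall>k\<in>K. 0 \<le> w k" and tb: "\<forall>k\<in>K. L \<le> t k \<and> t k \<le> H"
    and L: "0 < L" "L \<le> H"
    and hyp: "\<forall>q. 0 < q \<longrightarrow> q * (\<Sum>k\<in>{k\<in>K. q \<le> t k}. w k) \<le> M"
  shows "(\<Sum>k\<in>K. w k * t k) \<le> M * (1 + ln (H / L))"
proof -
  have I1: "((\<lambda>q. \<Sum>k\<in>K. w k * (if q \<in> {L..t k} then 1 else 0)) has_integral (\<Sum>k\<in>K. w k * (t k - L))) {L..H}"
    by (rule has_integral_sum[OF fin], rule has_integral_mult_right, rule step_integral) (use tb in auto)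
  have I2: "((\<lambda>q. M / q) has_integral (M * ln H - M * ln L)) {L..H}"
    by (rule inv_integral[OF L])
  have le: "(\<Sum>k\<in>K. w k * (if q \<in> {L..t k} then 1 else 0)) \<le> M / q" if q: "q \<in> {L..H}" for q
  proof -
    have "(\<Sum>k\<in>K. w k * (if q \<in> {L..t k} then 1 else 0)) = (\<Sum>k\<in>{k\<in>K. q \<le> t k}. w k)"
      using q fin by (simp add: sum.inter_filter[symmetric] if_distrib cong: if_cong)
    also have "\<dots> \<le> M / q" using hyp q L by (simp add: field_simps mult.commute)
    finally show ?thesis .
  qed
  have A: "(\<Sum>k\<in>K. w k * (t k - L)) \<le> M * ln H - M * ln L"
    by (rule has_integral_le[OF I1 I2 le])
  have B: "L * (\<Sum>k\<in>K. w k) \<le> M"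
  proof -
    have "{k\<in>K. L \<le> t k} = K" using tb by auto
    then show ?thesis using hyp L by force
  qed
  have "(\<Sum>k\<in>K. w k * t k) = L * (\<Sum>k\<in>K. w k) + (\<Sum>k\<in>K. w k * (t k - L))"
    by (simp add: sum_distrib_left algebra_simps sum.distrib[symmetric] sum_subtractf)
  also have "\<dots> \<le> M + (M * ln H - M * ln L)" using A B by linarith
  also have "\<dots> = M * (1 + ln (H / L))" using L by (simp add: ln_div algebra_simps)
  finally show ?thesis .
qed

lemma demand_alt: "demand a b p i j = exp (a i j - b i j * p i) / (1 + (\<Sum>k\<in>UNIV. exp (a k j - b k j * p k)))"
  by (simp add: demand_def)

lemma sum_demand_le1: "(\<Sum>i\<in>UNIV. demand a b p i j) \<le> 1"
proof -
  let ?E = "\<Sum>k\<in>UNIV. exp (a k j - b k j * p k)"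
  have E: "?E \<ge> 0" by (simp add: sum_nonneg)
  have "(\<Sum>i\<in>UNIV. demand a b p i j) = ?E / (1 + ?E)"
    by (simp add: demand_def sum_divide_distrib)
  also have "\<dots> \<le> 1" using E by simp
  finally show ?thesis .
qed

lemma key:
  fixes a b :: "'i::finite \<Rightarrow> 'j \<Rightarrow> real" and f pb :: "'i \<Rightarrow> real"
  assumes bpos: "\<forall>i. 0 < b i j" and fpos: "\<forall>i. 0 < f i"
    and cond: "(\<Sum>i\<in>UNIV. demand a b pb i j * f i) \<le> (MIN i. f i)"
    and q: "0 < q"
  shows "q * (\<Sum>i\<in>{i. q * f i \<le> pb i}. f i * demand a b pb i j) \<le> revj a b j (\<lambda>i. q * f i)"
proof -
  define e0 where "e0 i = exp (a i j - b i j * pb i)" for i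
  define e1 where "e1 i = exp (a i j - b i j * (q * f i))" for i
  define A where "A = {i. q * f i \<le> pb i}"
  define E0 where "E0 = (\<Sum>k\<in>UNIV. e0 k)"
  define E1 where "E1 = (\<Sum>k\<in>UNIV. e1 k)"
  define r where "r = (\<Sum>i\<in>A. f i * demand a b pb i j)"
  have E0: "E0 \<ge> 0" unfolding E0_def e0_def by (simp add: sum_nonneg)
  have E1: "E1 \<ge> 0" unfolding E1_def e1_def by (simp add: sum_nonneg)
  have dem: "demand a b pb i j = e0 i / (1 + E0)" for i by (simp add: demand_def e0_def E0_def)
  have r_eq: "r = (\<Sum>i\<in>A. f i * e0 i) / (1 + E0)"
    by (simp add: r_def dem sum_divide_distrib)
  have r0: "r \<ge> 0" unfolding r_eq using fpos E0 by (auto intro!: sum_nonneg divide_nonneg_pos simp: e0_def less_imp_le)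
  have "r \<le> (\<Sum>i\<in>UNIV. f i * demand a b pb i j)" unfolding r_def
    by (rule sum_mono2) (use fpos E0 in \<open>auto simp: dem e0_def less_imp_le\<close>)
  also have "\<dots> \<le> (MIN i. f i)" using cond by (simp add: mult.commute)
  finally have rmin: "r \<le> (MIN i. f i)" .
  have rf: "r \<le> f i" for i
    using rmin by (meson Min_le finite UNIV_I finite_imageI image_eqI order_trans)
  have e01: "e0 i \<le> e1 i" if "i \<in> A" for i
  proof -
    have "b i j * (q * f i) \<le> b i j * pb i" using that bpos by (auto simp: A_def intro: mult_left_mono less_imp_le)
    then show ?thesis unfolding e0_def e1_def by simp
  qed
  have "(\<Sum>i\<in>A. (f i - r) * e0 i) \<le> (\<Sum>i\<in>A. (f i - r) * e1 i)"
    by (rule sum_mono) (use rf e01 in \<open>auto intro: mult_left_mono\<close>)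
  also have "\<dots> \<le> (\<Sum>i\<in>UNIV. (f i - r) * e1 i)"
    by (rule sum_mono2) (use rf in \<open>auto simp: e1_def\<close>)
  finally have s1: "(\<Sum>i\<in>A. (f i - r) * e0 i) \<le> (\<Sum>i\<in>UNIV. (f i - r) * e1 i)" .
  have "(\<Sum>i\<in>A. (f i - r) * e0 i) = (\<Sum>i\<in>A. f i * e0 i) - r * (\<Sum>i\<in>A. e0 i)"
    by (simp add: algebra_simps sum_subtractf sum_distrib_left)
  also have "(\<Sum>i\<in>A. f i * e0 i) = r * (1 + E0)" using r_eq E0 by simp
  finally have s2: "(\<Sum>i\<in>A. (f i - r) * e0 i) = r * (1 + E0 - (\<Sum>i\<in>A. e0 i))" by (simp add: algebra_simps)
  have "(\<Sum>i\<in>A. e0 i) \<le> E0" unfolding E0_def by (rule sum_mono2) (auto simp: e0_def)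
  then have "r \<le> r * (1 + E0 - (\<Sum>i\<in>A. e0 i))" using r0 by (simp add: mult_le_cancel_left1)
  with s1 s2 have "r \<le> (\<Sum>i\<in>UNIV. (f i - r) * e1 i)" by linarith
  then have "r * (1 + E1) \<le> (\<Sum>i\<in>UNIV. f i * e1 i)"
    by (simp add: E1_def algebra_simps sum_subtractf sum_distrib_left)
  then have rle: "r \<le> (\<Sum>i\<in>UNIV. f i * e1 i) / (1 + E1)" using E1 by (simp add: field_simps)
  have rev: "revj a b j (\<lambda>i. q * f i) = q * ((\<Sum>i\<in>UNIV. f i * e1 i) / (1 + E1))"
    by (simp add: revj_def demand_def e1_def E1_def sum_divide_distrib sum_distrib_left algebra_simps)
  have "q * r \<le> q * ((\<Sum>i\<in>UNIV. f i * e1 i) / (1 + E1))" using rle q by (intro mult_left_mono) auto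
  then show ?thesis unfolding rev by (simp add: r_def A_def)
qed

lemma revj_split:
  fixes a b :: "'i::finite \<Rightarrow> 'j \<Rightarrow> real" and p :: "'i \<Rightarrow> real" and i :: 'i and j :: 'j and t :: real
  defines "C \<equiv> (\<Sum>k\<in>UNIV-{i}. p k * exp (a k j - b k j * p k))"
    and "D \<equiv> (\<Sum>k\<in>UNIV-{i}. exp (a k j - b k j * p k))"
  shows "revj a b j (p(i:=t)) = (t * exp (a i j - b i j * t) + C) / (1 + exp (a i j - b i j * t) + D)"
proof -
  have eq1: "(\<Sum>k\<in>UNIV-{i}. (p(i:=t)) k * exp (a k j - b k j * (p(i:=t)) k)) = C"
    unfolding C_def by (rule sum.cong) auto
  have eq2: "(\<Sum>k\<in>UNIV-{i}. exp (a k j - b k j * (p(i:=t)) k)) = D"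
    unfolding D_def by (rule sum.cong) auto
  have "revj a b j (p(i:=t)) = (\<Sum>k\<in>UNIV. (p(i:=t)) k * exp (a k j - b k j * (p(i:=t)) k)) / (1 + (\<Sum>k\<in>UNIV. exp (a k j - b k j * (p(i:=t)) k)))"
    by (simp add: revj_def demand_def sum_divide_distrib)
  also have "\<dots> = ((p(i:=t)) i * exp (a i j - b i j * (p(i:=t)) i) + (\<Sum>k\<in>UNIV-{i}. (p(i:=t)) k * exp (a k j - b k j * (p(i:=t)) k))) / (1 + (exp (a i j - b i j * (p(i:=t)) i) + (\<Sum>k\<in>UNIV-{i}. exp (a k j - b k j * (p(i:=t)) k))))"
    by (simp add: sum.remove[of UNIV i])
  also have "\<dots> = (t * exp (a i j - b i j * t) + C) / (1 + exp (a i j - b i j * t) + D)"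
    unfolding eq1 eq2 by (simp add: add.assoc)
  finally show ?thesis .
qed

lemma foc:
  fixes a b :: "'i::finite \<Rightarrow> 'j \<Rightarrow> real"
  assumes bpos: "0 < b i j" and ppos: "\<forall>k. 0 < p k"
    and opt: "\<forall>p'. (\<forall>k. 0 \<le> p' k) \<longrightarrow> revj a b j p' \<le> revj a b j p"
  shows "p i = 1 / b i j + revj a b j p"
proof -
  define C where "C = (\<Sum>k\<in>UNIV-{i}. p k * exp (a k j - b k j * p k))"
  define D where "D = (\<Sum>k\<in>UNIV-{i}. exp (a k j - b k j * p k))"
  define g where "g t = (t * exp (a i j - b i j * t) + C) / (1 + exp (a i j - b i j * t) + D)" for t
  have D0: "D \<ge> 0" unfolding D_def by (simp add: sum_nonneg)
  have gr: "g t = revj a b j (p(i:=t))" for t unfolding g_def C_def D_def by (rule revj_split[symmetric])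
  define x where "x = p i"
  have x0: "x > 0" using ppos by (simp add: x_def)
  define ex where "ex = exp (a i j - b i j * x)"
  have ex0: "ex > 0" by (simp add: ex_def)
  define N where "N = 1 + ex + D"
  have N0: "N > 0" using ex0 D0 by (simp add: N_def)
  define l where "l = ((ex - b i j * x * ex) * N - (x * ex + C) * (- b i j * ex)) / N^2"
  have der: "(g has_real_derivative l) (at x)"
    unfolding g_def l_def
    apply (rule derivative_eq_intros refl | simp)+
    using N0 by (auto simp: N_def ex_def power2_eq_square algebra_simps)
  have px: "p(i:=x) = p" by (auto simp: x_def)
  have "l = 0"
  proof (rule DERIV_local_max[OF der x0], intro allI impI)
    fix y assume "\<bar>x - y\<bar> < x"
    then have "y > 0" by auto
    then have "\<forall>k. 0 \<le> (p(i:=y)) k" using ppos by (auto intro: less_imp_le)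
    then show "g y \<le> g x" unfolding gr px using opt by blast
  qed
  then have "ex * ((1 - b i j * x) * N + b i j * (x * ex + C)) = 0"
    using N0 ex0 by (simp add: l_def algebra_simps)
  then have "(1 - b i j * x) * N + b i j * (x * ex + C) = 0"
    using ex0 by simp
  then have "x = 1 / b i j + (x * ex + C) / N"
    using N0 bpos by (simp add: field_simps)
  moreover have "revj a b j p = (x * ex + C) / N"
    using gr[of x] unfolding px g_def N_def ex_def by simp
  ultimately show ?thesis by (simp add: x_def)
qed

lemma sum_pair_UNIV:
  fixes h :: "('i::finite \<times> 'j::finite) \<Rightarrow> real"
  shows "(\<Sum>k\<in>UNIV. h k) = (\<Sum>j\<in>UNIV. \<Sum>i\<in>UNIV. h (i,j))"
proof -
  have "(\<Sum>j\<in>UNIV. \<Sum>i\<in>UNIV. h (i,j)) = (\<Sum>i\<in>UNIV. \<Sum>j\<in>UNIV. h (i,j))" by (rule sum.swap)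
  also have "\<dots> = (\<Sum>(i,j)\<in>UNIV \<times> UNIV. h (i,j))" by (rule sum.cartesian_product)
  also have "\<dots> = (\<Sum>k\<in>UNIV. h k)" by (simp add: case_prod_unfold)
  finally show ?thesis by simp
qed

lemma part3:
  fixes \<theta> :: "'j::finite \<Rightarrow> real"
    and a b :: "'i::finite \<Rightarrow> 'j \<Rightarrow> real"
    and pbar :: "'j \<Rightarrow> 'i \<Rightarrow> real" and f :: "'i \<Rightarrow> real"
  assumes theta_pos: "\<forall>j. 0 < \<theta> j"
    and b_pos: "\<forall>i j. 0 < b i j"
    and pbar_pos: "\<forall>j i. 0 < pbar j i"
    and pbar_opt: "\<forall>j p. (\<forall>i. 0 \<le> p i) \<longrightarrow> revj a b j p \<le> revj a b j (pbar j)"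
    and fpos: "\<forall>i. 0 < f i"
    and cond: "\<forall>j. (\<Sum>i\<in>UNIV. demand a b (pbar j) i j * f i) \<le> (MIN i. f i)"
  shows "Rbar \<theta> a b pbar \<le> beta pbar f * Rfac \<theta> a b f
          \<and> beta pbar f * Rfac \<theta> a b f \<le> beta pbar f * Ropt \<theta> a b"
proof -
  have rev_le: "revtot \<theta> a b p \<le> Rbar \<theta> a b pbar" if "\<forall>i. 0 \<le> p i" for p
    unfolding revtot_def Rbar_def
    by (rule sum_mono) (use theta_pos pbar_opt that in \<open>auto intro: mult_left_mono less_imp_le\<close>)
  define Y where "Y = {revtot \<theta> a b p | p. \<forall>i. 0 \<le> p i}"
  define X where "X = {revtot \<theta> a b (\<lambda>i. q * f i) | q::real. 0 < q}"
  have bddY: "bdd_above Y" unfolding Y_def bdd_above_def using rev_le by blast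
  have XY: "X \<subseteq> Y" 
  proof
    fix x assume "x \<in> X"
    then obtain q where q: "0 < q" "x = revtot \<theta> a b (\<lambda>i. q * f i)" unfolding X_def by blast
    have "\<forall>i. 0 \<le> q * f i" using q fpos by (simp add: less_imp_le)
    then show "x \<in> Y" unfolding Y_def using q by blast
  qed
  have bddX: "bdd_above X" using bdd_above_mono[OF bddY XY] .
  have Xne: "X \<noteq> {}" 
  proof -
    have "revtot \<theta> a b (\<lambda>i. 1 * f i) \<in> X" unfolding X_def by (rule CollectI, rule exI[of _ 1]) simp
    then show ?thesis by blast
  qed
  have RfRo: "Rfac \<theta> a b f \<le> Ropt \<theta> a b"
    unfolding Rfac_def Ropt_def using cSup_subset_mono[OF Xne bddY XY] by (simp add: X_def Y_def)
  have Rf_ub: "revtot \<theta> a b (\<lambda>i. q * f i) \<le> Rfac \<theta> a b f" if "0 < q" for q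
    unfolding Rfac_def using cSup_upper[OF _ bddX] that by (auto simp: X_def)
  define T where "T = {pbar j i / f i | i j. True}"
  have Tim: "T = (\<lambda>(i,j). pbar j i / f i) ` UNIV" unfolding T_def by auto
  have Tfin: "finite T" unfolding Tim by simp
  have Tne: "T \<noteq> {}" unfolding Tim by simp
  define L where "L = Min T"
  define H where "H = Max T"
  have LT: "L \<in> T" unfolding L_def using Min_in[OF Tfin Tne] .
  have L0: "0 < L" using LT pbar_pos fpos unfolding T_def by auto
  have tL: "L \<le> pbar j i / f i" for i j unfolding L_def using Tfin by (auto simp: T_def intro!: Min_le)
  have tH: "pbar j i / f i \<le> H" for i j unfolding H_def using Tfin by (auto simp: T_def intro!: Max_ge)
  have LH: "L \<le> H" using tL tH order_trans by blast
  have beta_eq: "beta pbar f = 1 + ln (H / L)"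
    unfolding beta_def qmin_def qmax_def L_def H_def T_def ..
  have beta0: "0 \<le> beta pbar f" unfolding beta_eq using L0 LH by (simp add: ln_ge_zero_iff)
  define w where "w = (\<lambda>(i,j). \<theta> j * demand a b (pbar j) i j * f i)"
  define t where "t = (\<lambda>(i,j). pbar j i / f i)"
  have dem0: "0 \<le> demand a b p i j" for p i j
    unfolding demand_def by (simp add: sum_nonneg add_pos_nonneg less_imp_le)
  have hyp: "\<forall>q. 0 < q \<longrightarrow> q * (\<Sum>k\<in>{k\<in>UNIV. q \<le> t k}. w k) \<le> Rfac \<theta> a b f"
  proof (intro allI impI)
    fix q :: real assume q: "0 < q"
    have "q * (\<Sum>k\<in>{k\<in>UNIV. q \<le> t k}. w k) = q * (\<Sum>k\<in>UNIV. if q \<le> t k then w k else 0)"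
      by (simp add: sum.If_cases)
    also have "(\<Sum>k\<in>UNIV. if q \<le> t k then w k else 0)
        = (\<Sum>j\<in>UNIV. \<Sum>i\<in>UNIV. if q \<le> t (i,j) then w (i,j) else 0)"
      by (rule sum_pair_UNIV)
    also have "\<dots> = (\<Sum>j\<in>UNIV. \<theta> j * (\<Sum>i\<in>{i. q * f i \<le> pbar j i}. f i * demand a b (pbar j) i j))"
    proof (rule sum.cong[OF refl])
      fix j
      have "(\<Sum>i\<in>UNIV. if q \<le> t (i,j) then w (i,j) else 0) = (\<Sum>i\<in>UNIV. if q * f i \<le> pbar j i then \<theta> j * (f i * demand a b (pbar j) i j) else 0)"
        by (rule sum.cong[OF refl]) (use fpos in \<open>simp add: t_def w_def le_divide_eq mult_ac\<close>)
      also have "\<dots> = \<theta> j * (\<Sum>i\<in>{i. q * f i \<le> pbar j i}. f i * demand a b (pbar j) i j)"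
        by (simp add: sum.If_cases sum_distrib_left)
      finally show "(\<Sum>i\<in>UNIV. if q \<le> t (i,j) then w (i,j) else 0) = \<theta> j * (\<Sum>i\<in>{i. q * f i \<le> pbar j i}. f i * demand a b (pbar j) i j)" .
    qed
    finally have "q * (\<Sum>k\<in>{k\<in>UNIV. q \<le> t k}. w k) = (\<Sum>j\<in>UNIV. \<theta> j * (q * (\<Sum>i\<in>{i. q * f i \<le> pbar j i}. f i * demand a b (pbar j) i j)))"
      by (simp add: sum_distrib_left mult_ac)
    also have "\<dots> \<le> (\<Sum>j\<in>UNIV. \<theta> j * revj a b j (\<lambda>i. q * f i))"
      by (rule sum_mono, rule mult_left_mono, rule key) (use b_pos fpos cond q theta_pos in \<open>auto intro: less_imp_le\<close>)
    also have "\<dots> = revtot \<theta> a b (\<lambda>i. q * f i)" by (simp add: revtot_def)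
    also have "\<dots> \<le> Rfac \<theta> a b f" using Rf_ub q .
    finally show "q * (\<Sum>k\<in>{k\<in>UNIV. q \<le> t k}. w k) \<le> Rfac \<theta> a b f" .
  qed
  have sb: "(\<Sum>k\<in>UNIV. w k * t k) \<le> Rfac \<theta> a b f * (1 + ln (H / L))"
    by (rule sum_bound[OF _ _ _ L0 LH hyp])
       (use dem0 tL tH in \<open>auto simp: w_def t_def intro!: mult_nonneg_nonneg less_imp_le[OF theta_pos[rule_format]] less_imp_le[OF fpos[rule_format]]\<close>)
  have "(\<Sum>k\<in>UNIV. w k * t k) = (\<Sum>j\<in>UNIV. \<Sum>i\<in>UNIV. w (i,j) * t (i,j))"
    by (rule sum_pair_UNIV)
  also have "\<dots> = Rbar \<theta> a b pbar"
    unfolding Rbar_def revj_def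
  proof (rule sum.cong[OF refl])
    fix j
    have "w (i,j) * t (i,j) = \<theta> j * (pbar j i * demand a b (pbar j) i j)" for i
      using fpos[rule_format, of i] by (simp add: w_def t_def field_simps)
    then show "(\<Sum>i\<in>UNIV. w (i,j) * t (i,j)) = \<theta> j * (\<Sum>i\<in>UNIV. pbar j i * demand a b (pbar j) i j)"
      by (simp add: sum_distrib_left)
  qed
  finally have "Rbar \<theta> a b pbar \<le> beta pbar f * Rfac \<theta> a b f"
    using sb beta_eq by (simp add: mult.commute)
  moreover have "beta pbar f * Rfac \<theta> a b f \<le> beta pbar f * Ropt \<theta> a b"
    using RfRo beta0 by (rule mult_left_mono)
  ultimately show ?thesis by blast
qed


theorem corollary3:
  fixes \<theta> :: "'j::finite \<Rightarrow> real"
    and a b :: "'i::finite \<Rightarrow> 'j \<Rightarrow> real"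
    and pbar :: "'j \<Rightarrow> 'i \<Rightarrow> real"
  assumes theta_pos: "\<forall>j. 0 < \<theta> j"
    and theta_sum: "(\<Sum>j\<in>UNIV. \<theta> j) = 1"
    and b_pos: "\<forall>i j. 0 < b i j"
    and pbar_pos: "\<forall>j i. 0 < pbar j i"
    and pbar_opt: "\<forall>j p. (\<forall>i. 0 \<le> p i) \<longrightarrow> revj a b j p \<le> revj a b j (pbar j)"
  shows
    "(Rbar \<theta> a b pbar \<le> beta pbar (\<lambda>_. 1) * Rfac \<theta> a b (\<lambda>_. 1)
      \<and> beta pbar (\<lambda>_. 1) * Rfac \<theta> a b (\<lambda>_. 1) \<le> beta pbar (\<lambda>_. 1) * Ropt \<theta> a b)
     \<and> ((\<forall>j. \<forall>i k. b i j = b k j) \<longrightarrow>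
          (\<exists>c. \<forall>i. econ_factor \<theta> a b pbar i = c) \<and> (\<exists>c. \<forall>i. robust_factor pbar i = c))
     \<and> (\<forall>f :: 'i \<Rightarrow> real. (\<forall>i. 0 < f i) \<longrightarrow>
          (\<forall>j. (\<Sum>i\<in>UNIV. demand a b (pbar j) i j * f i) \<le> (MIN i. f i)) \<longrightarrow>
          Rbar \<theta> a b pbar \<le> beta pbar f * Rfac \<theta> a b f
          \<and> beta pbar f * Rfac \<theta> a b f \<le> beta pbar f * Ropt \<theta> a b)"
proof (intro conjI)
  show P3: "\<forall>f :: 'i \<Rightarrow> real. (\<forall>i. 0 < f i) \<longrightarrow>
          (\<forall>j. (\<Sum>i\<in>UNIV. demand a b (pbar j) i j * f i) \<le> (MIN i. f i)) \<longrightarrow>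
          Rbar \<theta> a b pbar \<le> beta pbar f * Rfac \<theta> a b f
          \<and> beta pbar f * Rfac \<theta> a b f \<le> beta pbar f * Ropt \<theta> a b"
    using part3[OF theta_pos b_pos pbar_pos pbar_opt] by blast
  have c1: "\<forall>j. (\<Sum>i\<in>UNIV. demand a b (pbar j) i j * 1) \<le> (MIN i::'i. (1::real))"
    by (simp, intro allI sum_demand_le1)
  have "(\<forall>i::'i. (0::real) < 1)" by simp
  then have "Rbar \<theta> a b pbar \<le> beta pbar (\<lambda>_. 1) * Rfac \<theta> a b (\<lambda>_. 1)
      \<and> beta pbar (\<lambda>_. 1) * Rfac \<theta> a b (\<lambda>_. 1) \<le> beta pbar (\<lambda>_. 1) * Ropt \<theta> a b"
    using P3[rule_format, of "\<lambda>_. 1"] c1 by blast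
  then show "Rbar \<theta> a b pbar \<le> beta pbar (\<lambda>_. 1) * Rfac \<theta> a b (\<lambda>_. 1)"
    "beta pbar (\<lambda>_. 1) * Rfac \<theta> a b (\<lambda>_. 1) \<le> beta pbar (\<lambda>_. 1) * Ropt \<theta> a b" by auto
  show "(\<forall>j. \<forall>i k. b i j = b k j) \<longrightarrow>
          (\<exists>c. \<forall>i. econ_factor \<theta> a b pbar i = c) \<and> (\<exists>c. \<forall>i. robust_factor pbar i = c)"
  proof
    assume beq: "\<forall>j. \<forall>i k. b i j = b k j"
    define i0 :: 'i where "i0 = undefined"
    have pc: "pbar j i = pbar j i0" for j i
    proof -
      have "pbar j i = 1 / b i j + revj a b j (pbar j)"
        using foc[of b i j "pbar j" a] b_pos pbar_pos pbar_opt by blast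
      moreover have "pbar j i0 = 1 / b i0 j + revj a b j (pbar j)"
        using foc[of b i0 j "pbar j" a] b_pos pbar_pos pbar_opt by blast
      ultimately show ?thesis using beq by metis
    qed
    have "econ_factor \<theta> a b pbar i = econ_factor \<theta> a b pbar i0" for i
      unfolding econ_factor_def by (simp add: pc[of _ i])
    moreover have "robust_factor pbar i = robust_factor pbar i0" for i
      unfolding robust_factor_def by (simp add: pc[of _ i])
    ultimately show "(\<exists>c. \<forall>i. econ_factor \<theta> a b pbar i = c) \<and> (\<exists>c. \<forall>i. robust_factor pbar i = c)"
      by blast
  qed
qed

end
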